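(* For each $n\ge3$, the algebra $\mathcal P_n$ defined by $\mathcal P_3=\mathcal{TC}$ and $\mathcal P_n=\mathcal P_{n-1}\sqcup\mathbf 2$ for $n>3$ is a BCK-algebra of order $n$ with $\operatorname{pid}(\mathcal P_n)=\frac{n^2-1}{n^2}$. Consequently the equation $(x\cdot y)\cdot y=x\cdot y$ has no finite satisfiability gap among BCK-algebras.
   Context: A BCK-algebra is a set $A$ with a binary operation $\cdot$ and a constant $0$ such that for all $x,y,z\in A$: (BCK1) $((x\cdot y)\cdot(x\cdot z))\cdot(z\cdot y)=0$; (BCK2) $(x\cdot(x\cdot y))\cdot y=0$; (BCK3) $x\cdot x=0$; (BCK4) $0\cdot x=0$; (BCK5) $x\cdot y=0$ and $y\cdot x=0$ imply $x=y$. For finite $\mathcal A$, $\operatorname{pid}(\mathcal A)=|\{(x,y)\in A^2:(x\cdot y)\cdot y=x\cdot y\}|/|A|^2$. $\mathcal{TC}$ is the BCK-algebra on $\{0,1,2\}$ with $x\cdot y=\max\{x-y,0\}$. $\mathbf 2$ is a two-element BCK-algebra $\{0,b\}$ with $b\cdot0=b$ and other products $0$, $b$ a new element. For BCK-algebras $\mathcal A,\mathcal B$ with $A\cap B=\{0\}$, the BCK-union $\mathcal A\sqcup\mathcal B$ has carrier $A\cup B$, with $x\cdot y$ computed in $\mathcal A$ if $x,y\in A$, in $\mathcal B$ if $x,y\in B$, and $x\cdot y=x$ otherwise. An equation has no finite satisfiability gap in a class if for every $\epsilon>0$ some finite member has degree of satisfiability strictly between $1-\epsilon$ and $1$. *)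

theory Defs
  imports Complex_Main
begin

definition bck_algebra :: "'a set \<Rightarrow> ('a \<Rightarrow> 'a \<Rightarrow> 'a) \<Rightarrow> 'a \<Rightarrow> bool" where
  "bck_algebra A m z \<longleftrightarrow> z \<in> A \<and> (\<forall>x\<in>A. \<forall>y\<in>A. m x y \<in> A) \<and>
     (\<forall>x\<in>A. \<forall>y\<in>A. \<forall>w\<in>A. m (m (m x y) (m x w)) (m w y) = z) \<and>
     (\<forall>x\<in>A. \<forall>y\<in>A. m (m x (m x y)) y = z) \<and>
     (\<forall>x\<in>A. m x x = z) \<and>
     (\<forall>x\<in>A. m z x = z) \<and>
     (\<forall>x\<in>A. \<forall>y\<in>A. m x y = z \<and> m y x = z \<longrightarrow> x = y)"

definition pid :: "'a set \<Rightarrow> ('a \<Rightarrow> 'a \<Rightarrow> 'a) \<Rightarrow> real" where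
  "pid A m = real (card {(x, y). x \<in> A \<and> y \<in> A \<and> m (m x y) y = m x y}) / real (card A) ^ 2"

text \<open>TC: carrier {0,1,2}, x*y = max(x-y,0) (truncated nat subtraction).\<close>
definition tc_op :: "nat \<Rightarrow> nat \<Rightarrow> nat" where
  "tc_op x y = x - y"

definition two_op :: "'a::zero \<Rightarrow> 'a \<Rightarrow> 'a \<Rightarrow> 'a" where
  "two_op b x y = (if x = b \<and> y = 0 then b else 0)"

text \<open>BCK-union of (A,f) and (B,g) (with A \<inter> B = {0}).\<close>
definition bck_union_op :: "'a set \<Rightarrow> ('a \<Rightarrow> 'a \<Rightarrow> 'a) \<Rightarrow> 'a set \<Rightarrow> ('a \<Rightarrow> 'a \<Rightarrow> 'a) \<Rightarrow> 'a \<Rightarrow> 'a \<Rightarrow> 'a" where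
  "bck_union_op A f B g x y =
     (if x \<in> A \<and> y \<in> A then f x y else if x \<in> B \<and> y \<in> B then g x y else x)"

fun P_car :: "nat \<Rightarrow> nat set" where
  "P_car n = (if n \<le> 3 then {0, 1, 2} else P_car (n - 1) \<union> {n - 1})"

fun P_op :: "nat \<Rightarrow> nat \<Rightarrow> nat \<Rightarrow> nat" where
  "P_op n = (if n \<le> 3 then tc_op
             else bck_union_op (P_car (n - 1)) (P_op (n - 1)) {0, n - 1} (two_op (n - 1)))"

declare P_car.simps [simp del] P_op.simps [simp del]

end

theory Submission
  imports Defs
begin

definition Q :: "nat \<Rightarrow> nat \<Rightarrow> nat" where
  "Q x y = (if x \<le> 2 \<and> y \<le> 2 then x - y else if x = y then 0 else x)"

lemma four: "(x::nat) = 0 \<or> x = 1 \<or> x = 2 \<or> x \<ge> 3" by auto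
lemma QB: "x \<ge> 3 \<Longrightarrow> Q x y = (if x = y then 0 else x)" by (simp add: Q_def)
lemma QB2: "y \<ge> 3 \<Longrightarrow> Q x y = (if x = y then 0 else x)" by (simp add: Q_def)
lemma Qxx: "Q x x = 0" by (simp add: Q_def)
lemma Q0: "Q 0 x = 0" by (simp add: Q_def)
lemma Qx0: "Q x 0 = x" by (simp add: Q_def)
lemma Q12: "Q (Suc 0) 2 = 0" by (simp add: Q_def)
lemma Q21: "Q 2 (Suc 0) = 1" by (simp add: Q_def)
lemma a1: "Q (Q (Q x y) (Q x w)) (Q w y) = 0"
  using four[of x] four[of y] four[of w]
  apply (elim disjE)
  apply (simp_all add: Qxx Q0 Qx0 QB QB2 Q12 Q21)
  done
lemma a2: "Q (Q x (Q x y)) y = 0"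
  using four[of x] four[of y]
  by (cases "x=y"; elim disjE; simp add: Q_def)
lemma a5: "Q x y = 0 \<Longrightarrow> Q y x = 0 \<Longrightarrow> x = y"
  using four[of x] four[of y]
  by (cases "x=y"; elim disjE; simp add: Q_def)
lemma P3: "P_car 3 = {0,1,2}" by (subst P_car.simps) simp
lemma Ps: "n \<ge> 3 \<Longrightarrow> P_car (Suc n) = P_car n \<union> {n}" by (subst P_car.simps) simp
lemma Pcar: "n \<ge> 3 \<Longrightarrow> P_car n = {..<n}"
proof (induction n rule: nat_induct_at_least)
  case base show ?case unfolding P3 by auto
next
  case (Suc n)
  have "P_car (Suc n) = P_car n \<union> {n}" using Ps Suc.hyps by blast
  also have "\<dots> = {..<n} \<union> {n}" using Suc.IH by simp
  finally show ?case using lessThan_Suc by auto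
qed
lemma O3: "P_op 3 = tc_op" by (subst P_op.simps) simp
lemma Os: "n \<ge> 3 \<Longrightarrow> P_op (Suc n) = bck_union_op (P_car n) (P_op n) {0, n} (two_op n)"
  by (subst P_op.simps) simp
lemma Pop: "n \<ge> 3 \<Longrightarrow> x < n \<Longrightarrow> y < n \<Longrightarrow> P_op n x y = Q x y"
proof (induction n arbitrary: x y rule: nat_induct_at_least)
  case base then show ?case unfolding O3 tc_op_def Q_def by simp
next
  case (Suc n)
  have ih: "\<And>x y. x < n \<Longrightarrow> y < n \<Longrightarrow> P_op n x y = Q x y" using Suc by blast
  have e: "P_op (Suc n) x y = bck_union_op {..<n} (P_op n) {0, n} (two_op n) x y"
    using Os[OF Suc.hyps] Pcar[OF Suc.hyps] by simp
  show ?case unfolding e bck_union_op_def two_op_def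
    using Suc.hyps Suc.prems ih[of x y] by (auto simp: Q_def)
qed
lemma Qlt: "x < n \<Longrightarrow> y < n \<Longrightarrow> n \<ge> 3 \<Longrightarrow> Q x y < n"
  unfolding Q_def by auto

lemma Qid: "Q (Q x y) y = Q x y \<longleftrightarrow> \<not> (x = 2 \<and> y = 1)"
  using four[of x] four[of y]
  by (elim disjE) (simp_all add: Qxx Q0 Qx0 QB QB2 Q12 Q21)

lemma Qbck: "bck_algebra {..<n} Q 0" if "n \<ge> 3"
  unfolding bck_algebra_def
proof (intro conjI ballI impI)
  show "0 \<in> {..<n}" using that by simp
  fix x y assume "x \<in> {..<n}" "y \<in> {..<n}"
  then show "Q x y \<in> {..<n}" using Qlt that by simp
next
  fix x y w show "Q (Q (Q x y) (Q x w)) (Q w y) = 0" by (rule a1)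
next
  fix x y show "Q (Q x (Q x y)) y = 0" by (rule a2)
next
  fix x show "Q x x = 0" unfolding Q_def by simp
next
  fix x show "Q 0 x = 0" unfolding Q_def by simp
next
  fix x y assume "Q x y = 0 \<and> Q y x = 0" then show "x = y" using a5 by blast
qed
lemma bck_cong: "bck_algebra A f z \<Longrightarrow> (\<And>x y. x \<in> A \<Longrightarrow> y \<in> A \<Longrightarrow> g x y = f x y) \<Longrightarrow> bck_algebra A g z"
  unfolding bck_algebra_def by simp

lemma pidQ: assumes "n \<ge> 3" shows "pid {..<n} Q = (real n ^ 2 - 1) / real n ^ 2"
proof -
  have s: "{(x, y). x \<in> {..<n} \<and> y \<in> {..<n} \<and> Q (Q x y) y = Q x y} = ({..<n} \<times> {..<n}) - {(2,1)}"
    using assms Qid by auto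
  have "card (({..<n} \<times> {..<n}) - {(2::nat,1::nat)}) = n*n - 1"
    using assms by (subst card_Diff_singleton) (auto simp: card_cartesian_product)
  moreover have "n*n \<ge> 1" using assms by simp
  ultimately show ?thesis unfolding pid_def s by (simp add: of_nat_diff power2_eq_square)
qed

lemma pidP: "n \<ge> 3 \<Longrightarrow> pid (P_car n) (P_op n) = (real n ^ 2 - 1) / real n ^ 2"
proof -
  assume n: "n \<ge> 3"
  have "{(x, y). x \<in> {..<n} \<and> y \<in> {..<n} \<and> P_op n (P_op n x y) y = P_op n x y}
      = {(x, y). x \<in> {..<n} \<and> y \<in> {..<n} \<and> Q (Q x y) y = Q x y}"
  proof (intro Collect_cong)
    fix p :: "nat \<times> nat"
    obtain x y where p: "p = (x, y)" by (cases p)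
    show "(case p of (x, y) \<Rightarrow> x \<in> {..<n} \<and> y \<in> {..<n} \<and> P_op n (P_op n x y) y = P_op n x y) =
          (case p of (x, y) \<Rightarrow> x \<in> {..<n} \<and> y \<in> {..<n} \<and> Q (Q x y) y = Q x y)"
      unfolding p using Pop[OF n] Qlt[OF _ _ n] by auto
  qed
  then show ?thesis using pidQ[OF n] n unfolding pid_def Pcar[OF n] by simp
qed

lemma bckP: "n \<ge> 3 \<Longrightarrow> bck_algebra (P_car n) (P_op n) 0"
proof -
  assume n: "n \<ge> 3"
  show ?thesis unfolding Pcar[OF n] by (rule bck_cong[OF Qbck[OF n]]) (simp add: Pop[OF n])
qed

theorem mainTheorem13:
  shows "(\<forall>n::nat. n \<ge> 3 \<longrightarrow>
            bck_algebra (P_car n) (P_op n) 0 \<and> card (P_car n) = n \<and>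
            pid (P_car n) (P_op n) = (real n ^ 2 - 1) / real n ^ 2)
       \<and> (\<forall>\<epsilon>::real. \<epsilon> > 0 \<longrightarrow>
            (\<exists>(A::nat set) m z. finite A \<and> bck_algebra A m z \<and>
               1 - \<epsilon> < pid A m \<and> pid A m < 1))"
proof (intro conjI allI impI)
  fix n :: nat assume n: "n \<ge> 3"
  show "bck_algebra (P_car n) (P_op n) 0" using bckP[OF n] .
  show "card (P_car n) = n" using Pcar[OF n] by simp
  show "pid (P_car n) (P_op n) = (real n ^ 2 - 1) / real n ^ 2" using pidP[OF n] .
next
  fix e :: real assume e: "e > 0"
  define n where "n = max 3 (nat \<lceil>1/e\<rceil> + 1)"
  have n3: "n \<ge> 3" by (simp add: n_def)
  have "real n > 1/e" unfolding n_def by linarith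
  hence ne: "real n * e > 1" using e by (simp add: field_simps)
  have sq: "real n ^ 2 \<ge> real n" using n3 by (simp add: power2_eq_square)
  have np: "real n ^ 2 > 0" using n3 by simp
  have eq: "(real n ^ 2 - 1) / real n ^ 2 = 1 - 1 / real n ^ 2" using np by (simp add: field_simps)
  have "1 / real n ^ 2 < e"
  proof -
    have "real n ^ 2 * e \<ge> real n * e" using sq e by (simp add: mult_right_mono)
    with ne have "real n ^ 2 * e > 1" by linarith
    thus ?thesis using np by (simp add: field_simps)
  qed
  moreover have "1 / real n ^ 2 > 0" using np by simp
  ultimately show "\<exists>(A::nat set) m z. finite A \<and> bck_algebra A m z \<and> 1 - e < pid A m \<and> pid A m < 1"
    using bckP[OF n3] pidP[OF n3] Pcar[OF n3] eq
    by (intro exI[of _ "P_car n"] exI[of _ "P_op n"] exI[of _ 0]) auto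
qed

end
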